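(* Let $A\subseteq B$ be a ring extension (commutative rings with identity) with the finite character. Then every $B$-regular and locally principal ideal of $A$ is $B$-invertible.
   Context: For an $A$-submodule $S$ of $B$: $S$ is $B$-regular if $SB=B$; $S$ is $B$-invertible if there is an $A$-submodule $U$ of $B$ with $SU=A$. The extension $A\subseteq B$ has the finite character if every $B$-regular ideal of $A$ is contained in only finitely many maximal ideals of $A$. An ideal $\mathfrak a$ of $A$ is locally principal if $\mathfrak aA_{\mathfrak m}$ is principal for every maximal ideal $\mathfrak m$ of $A$. *)

theory Defs
  imports Main
begin

text \<open>Ring extension A \<subseteq> B: B is the ambient commutative ring (a type of class
comm_ring_1), A is a subring of B given as a set containing 1.\<close>

definition is_subring :: "'b::comm_ring_1 set \<Rightarrow> bool" where
  "is_subring A \<longleftrightarrow> 0 \<in> A \<and> 1 \<in> A \<and> (\<forall>x\<in>A. \<forall>y\<in>A. x + y \<in> A \<and> x * y \<in> A \<and> - x \<in> A)"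

definition A_submodule :: "'b::comm_ring_1 set \<Rightarrow> 'b set \<Rightarrow> bool" where
  "A_submodule A S \<longleftrightarrow> 0 \<in> S \<and> (\<forall>x\<in>S. \<forall>y\<in>S. x + y \<in> S) \<and> (\<forall>a\<in>A. \<forall>x\<in>S. a * x \<in> S)"

definition ideal_of :: "'b::comm_ring_1 set \<Rightarrow> 'b set \<Rightarrow> bool" where
  "ideal_of A I \<longleftrightarrow> A_submodule A I \<and> I \<subseteq> A"

definition maximal_ideal_of :: "'b::comm_ring_1 set \<Rightarrow> 'b set \<Rightarrow> bool" where
  "maximal_ideal_of A m \<longleftrightarrow> ideal_of A m \<and> m \<noteq> A \<and>
     (\<forall>J. ideal_of A J \<and> m \<subseteq> J \<longrightarrow> J = m \<or> J = A)"

definition mod_prod :: "'b::comm_ring_1 set \<Rightarrow> 'b set \<Rightarrow> 'b set" where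
  "mod_prod S U = {x. \<exists>(n::nat) s u. (\<forall>i<n. s i \<in> S \<and> u i \<in> U) \<and> x = (\<Sum>i<n. s i * u i)}"

definition B_regular :: "'b::comm_ring_1 set \<Rightarrow> bool" where
  "B_regular S \<longleftrightarrow> mod_prod S UNIV = UNIV"

definition B_invertible :: "'b::comm_ring_1 set \<Rightarrow> 'b set \<Rightarrow> bool" where
  "B_invertible A S \<longleftrightarrow> (\<exists>U. A_submodule A U \<and> mod_prod S U = A)"

definition finite_character :: "'b::comm_ring_1 set \<Rightarrow> bool" where
  "finite_character A \<longleftrightarrow>
     (\<forall>I. ideal_of A I \<and> B_regular I \<longrightarrow> finite {m. maximal_ideal_of A m \<and> I \<subseteq> m})"

text \<open>Locally principal: for every maximal ideal m, I A_m is principal.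
  Unfolded without a localization type: I A_m = (a/1) A_m for some a \<in> I, i.e.
  every b \<in> I satisfies t b = c a in A for some t \<in> A - m, c \<in> A.\<close>
definition locally_principal :: "'b::comm_ring_1 set \<Rightarrow> 'b set \<Rightarrow> bool" where
  "locally_principal A I \<longleftrightarrow>
     (\<forall>m. maximal_ideal_of A m \<longrightarrow>
        (\<exists>a\<in>I. \<forall>b\<in>I. \<exists>t\<in>A - m. \<exists>c\<in>A. t * b = c * a))"

end

theory Submission
  imports Defs
begin

lemma sr:
  assumes "is_subring A"
  shows "0 \<in> A" "1 \<in> A" "x \<in> A \<Longrightarrow> y \<in> A \<Longrightarrow> x + y \<in> A"
    "x \<in> A \<Longrightarrow> y \<in> A \<Longrightarrow> x * y \<in> A" "x \<in> A \<Longrightarrow> - x \<in> A"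
  using assms unfolding is_subring_def by auto

lemma sr_submod: "is_subring A \<Longrightarrow> A_submodule A A"
  unfolding A_submodule_def using sr by blast

lemma sum_in_submod:
  assumes "A_submodule A S" "\<And>i. i \<in> X \<Longrightarrow> f i \<in> S"
  shows "sum f X \<in> S"
proof (cases "finite X")
  case True
  then show ?thesis using assms(2)
  proof (induction X rule: finite_induct)
    case empty then show ?case using assms(1) by (simp add: A_submodule_def)
  next
    case (insert x F) then show ?case using assms(1) by (simp add: A_submodule_def)
  qed
next
  case False then show ?thesis using assms(1) by (simp add: A_submodule_def)
qed

lemma prod_in:
  assumes "is_subring A" "\<And>i. i \<in> X \<Longrightarrow> f i \<in> A"
  shows "prod f X \<in> A"
proof (cases "finite X")
  case True
  then show ?thesis using assms(2)
  proof (induction X rule: finite_induct)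
    case empty then show ?case using sr[OF assms(1)] by simp
  next
    case (insert x F) then show ?case using sr[OF assms(1)] by simp
  qed
next
  case False then show ?thesis using sr[OF assms(1)] by simp
qed

lemma ideal_one:
  assumes "is_subring A" "ideal_of A J" "1 \<in> J"
  shows "J = A"
proof
  show "J \<subseteq> A" using assms(2) by (simp add: ideal_of_def)
  show "A \<subseteq> J"
  proof
    fix a assume "a \<in> A"
    then have "a * 1 \<in> J" using assms(2,3) \<open>a \<in> A\<close> unfolding ideal_of_def A_submodule_def by blast
    then show "a \<in> J" by simp
  qed
qed

lemma krull:
  assumes sub: "is_subring A" and K: "ideal_of A K" and n1: "1 \<notin> K"
  shows "\<exists>m. maximal_ideal_of A m \<and> K \<subseteq> m"
proof -
  define S where "S = {J. ideal_of A J \<and> K \<subseteq> J \<and> 1 \<notin> J}"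
  have "\<forall>C\<in>chains S. \<exists>U\<in>S. \<forall>X\<in>C. X \<subseteq> U"
  proof
    fix C assume C: "C \<in> chains S"
    show "\<exists>U\<in>S. \<forall>X\<in>C. X \<subseteq> U"
    proof (cases "C = {}")
      case True then show ?thesis using K n1 by (auto simp: S_def)
    next
      case False
      have CS: "C \<subseteq> S" and ch: "\<And>X Y. X \<in> C \<Longrightarrow> Y \<in> C \<Longrightarrow> X \<subseteq> Y \<or> Y \<subseteq> X"
        using C by (auto simp: chains_def chain_subset_def)
      have "ideal_of A (\<Union>C)"
        unfolding ideal_of_def A_submodule_def
      proof (intro conjI ballI)
        show "0 \<in> \<Union>C" using False CS by (auto simp: S_def ideal_of_def A_submodule_def)
        show "\<Union>C \<subseteq> A" using CS by (auto simp: S_def ideal_of_def)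
      next
        fix x y assume "x \<in> \<Union>C" "y \<in> \<Union>C"
        then obtain X Y where XY: "X \<in> C" "Y \<in> C" "x \<in> X" "y \<in> Y" by auto
        from ch[OF XY(1,2)] show "x + y \<in> \<Union>C"
        proof
          assume "X \<subseteq> Y"
          have "Y \<in> S" using XY CS by auto
          then have "ideal_of A Y" by (simp add: S_def)
          then have "x + y \<in> Y" using XY \<open>X \<subseteq> Y\<close> by (auto simp: ideal_of_def A_submodule_def)
          then show ?thesis using XY by auto
        next
          assume "Y \<subseteq> X"
          have "X \<in> S" using XY CS by auto
          then have "ideal_of A X" by (simp add: S_def)
          then have "x + y \<in> X" using XY \<open>Y \<subseteq> X\<close> by (auto simp: ideal_of_def A_submodule_def)
          then show ?thesis using XY by auto
        qed
      next
        fix a x assume "a \<in> A" "x \<in> \<Union>C"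
        then obtain X where X: "X \<in> C" "x \<in> X" by auto
        then have "X \<in> S" using CS by auto
        then have "ideal_of A X" by (simp add: S_def)
        then have "a * x \<in> X" using X \<open>a \<in> A\<close> by (auto simp: ideal_of_def A_submodule_def)
        then show "a * x \<in> \<Union>C" using X by auto
      qed
      moreover have "K \<subseteq> \<Union>C" "1 \<notin> \<Union>C" using False CS by (auto simp: S_def)
      ultimately show ?thesis by (auto simp: S_def)
    qed
  qed
  from Zorn_Lemma2[OF this] obtain M where M: "M \<in> S" and Mmax: "\<forall>X\<in>S. M \<subseteq> X \<longrightarrow> X = M"
    by blast
  have "maximal_ideal_of A M"
    unfolding maximal_ideal_of_def
  proof (intro conjI allI impI)
    show "ideal_of A M" using M by (simp add: S_def)
    show "M \<noteq> A" using M sr(2)[OF sub] by (auto simp: S_def)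
  next
    fix J assume J: "ideal_of A J \<and> M \<subseteq> J"
    show "J = M \<or> J = A"
    proof (cases "1 \<in> J")
      case True then show ?thesis using ideal_one[OF sub] J by blast
    next
      case False then have "J \<in> S" using J M by (auto simp: S_def)
      then show ?thesis using Mmax J by blast
    qed
  qed
  then show ?thesis using M by (auto simp: S_def)
qed

lemma max_prime:
  assumes sub: "is_subring A" and m: "maximal_ideal_of A m"
    and xy: "x \<in> A" "y \<in> A" "x \<notin> m" "y \<notin> m"
  shows "x * y \<notin> m"
proof
  assume xym: "x * y \<in> m"
  have mi: "ideal_of A m" using m by (simp add: maximal_ideal_of_def)
  define J where "J = {z + r * x | z r. z \<in> m \<and> r \<in> A}"
  have mA: "m \<subseteq> A" using mi by (simp add: ideal_of_def)
  have "ideal_of A J"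
    unfolding ideal_of_def A_submodule_def
  proof (intro conjI ballI)
    show "0 \<in> J" unfolding J_def using mi sr[OF sub]
      by (auto simp: ideal_of_def A_submodule_def intro!: exI[of _ 0])
    show "J \<subseteq> A" unfolding J_def using mA sr[OF sub] xy by auto
  next
    fix a b assume "a \<in> J" "b \<in> J"
    then obtain z r z' r' where "a = z + r * x" "b = z' + r' * x" "z \<in> m" "r \<in> A" "z' \<in> m" "r' \<in> A"
      unfolding J_def by auto
    moreover have "z + z' \<in> m" "r + r' \<in> A" using calculation mi sr[OF sub] by (auto simp: ideal_of_def A_submodule_def)
    moreover have "a + b = (z + z') + (r + r') * x" using calculation by (simp add: algebra_simps)
    ultimately show "a + b \<in> J" unfolding J_def by blast
  next
    fix a b assume "a \<in> A" "b \<in> J"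
    then obtain z r where "b = z + r * x" "z \<in> m" "r \<in> A"
      unfolding J_def by auto
    moreover have "a * z \<in> m" "a * r \<in> A" using calculation mi sr[OF sub] \<open>a \<in> A\<close> by (auto simp: ideal_of_def A_submodule_def)
    moreover have "a * b = (a * z) + (a * r) * x" using calculation by (simp add: algebra_simps)
    ultimately show "a * b \<in> J" unfolding J_def by blast
  qed
  moreover have "m \<subseteq> J"
  proof
    fix z assume "z \<in> m"
    then have "z = z + 0 * x \<and> z \<in> m \<and> 0 \<in> A" using sr(1)[OF sub] by simp
    then show "z \<in> J" unfolding J_def by blast
  qed
  moreover have "x \<in> J"
  proof -
    have "x = 0 + 1 * x \<and> 0 \<in> m \<and> 1 \<in> A" using sr(2)[OF sub] mi by (simp add: ideal_of_def A_submodule_def)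
    then show ?thesis unfolding J_def by blast
  qed
  ultimately have "J = A" using m xy by (auto simp: maximal_ideal_of_def)
  then have "1 \<in> J" using sr[OF sub] by simp
  then obtain z r where zr: "1 = z + r * x" "z \<in> m" "r \<in> A" unfolding J_def by auto
  have "y = y * z + r * (x * y)" using zr(1) by (metis mult.commute mult.left_commute mult_1_right distrib_left)
  moreover have "y * z \<in> m" using zr mi xy by (auto simp: ideal_of_def A_submodule_def mult.commute)
  moreover have "r * (x * y) \<in> m" using zr mi xym by (auto simp: ideal_of_def A_submodule_def)
  ultimately have "y \<in> m" using mi by (metis ideal_of_def A_submodule_def)
  then show False using xy by simp
qed

lemma prod_notin:
  assumes sub: "is_subring A" and m: "maximal_ideal_of A m" and fin: "finite X"
    and f: "\<And>i. i \<in> X \<Longrightarrow> f i \<in> A - m"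
  shows "prod f X \<in> A - m"
  using fin f
proof (induction X rule: finite_induct)
  case empty
  have "1 \<notin> m" using ideal_one[OF sub] m by (auto simp: maximal_ideal_of_def)
  then show ?case using sr[OF sub] by simp
next
  case (insert x F)
  then show ?case using max_prime[OF sub m] prod_in[OF sub] sr[OF sub] by auto
qed

definition spn :: "'b::comm_ring_1 set \<Rightarrow> 'b set \<Rightarrow> 'b set" where
  "spn A X = {v. \<exists>r. (\<forall>y\<in>X. r y \<in> A) \<and> v = (\<Sum>y\<in>X. r y * y)}"

lemma spn_ideal:
  assumes sub: "is_subring A" and XA: "X \<subseteq> A"
  shows "ideal_of A (spn A X)"
  unfolding ideal_of_def A_submodule_def
proof (intro conjI ballI)
  show "0 \<in> spn A X" unfolding spn_def using sr[OF sub] by (auto intro!: exI[of _ "\<lambda>_. 0"])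
  show "spn A X \<subseteq> A" unfolding spn_def using XA
    by (auto intro!: sum_in_submod[OF sr_submod[OF sub]] sr(4)[OF sub])
next
  fix a b assume "a \<in> spn A X" "b \<in> spn A X"
  then obtain r r' where "\<forall>y\<in>X. r y \<in> A" "a = (\<Sum>y\<in>X. r y * y)" "\<forall>y\<in>X. r' y \<in> A" "b = (\<Sum>y\<in>X. r' y * y)"
    unfolding spn_def by auto
  then show "a + b \<in> spn A X" unfolding spn_def using sr[OF sub]
    by (auto simp: sum.distrib[symmetric] distrib_right intro!: exI[of _ "\<lambda>y. r y + r' y"])
next
  fix a b assume "a \<in> A" "b \<in> spn A X"
  then obtain r where "\<forall>y\<in>X. r y \<in> A" "b = (\<Sum>y\<in>X. r y * y)"
    unfolding spn_def by auto
  then show "a * b \<in> spn A X" unfolding spn_def using sr[OF sub] \<open>a \<in> A\<close>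
    by (auto simp: sum_distrib_left mult.assoc intro!: exI[of _ "\<lambda>y. a * r y"])
qed

lemma spn_mem:
  assumes sub: "is_subring A" and fin: "finite X" and y: "y \<in> X"
  shows "y \<in> spn A X"
proof -
  have "(\<Sum>z\<in>X. (if z = y then 1 else 0) * z) = (\<Sum>z\<in>X. if z = y then z else 0)"
    by (rule sum.cong) auto
  also have "\<dots> = y" using fin y by simp
  finally have "(\<Sum>z\<in>X. (if z = y then 1 else 0) * z) = y" .
  then show ?thesis unfolding spn_def using sr[OF sub]
    by (auto intro!: exI[of _ "\<lambda>z. if z = y then 1 else 0"])
qed

lemma spn_sub:
  assumes "ideal_of A m" "X \<subseteq> m"
  shows "spn A X \<subseteq> m"
  unfolding spn_def using assms
  by (auto intro!: sum_in_submod[of A m] simp: ideal_of_def A_submodule_def subset_iff)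

lemma mod_prod_add_one:
  assumes "x \<in> mod_prod S U" "s \<in> S" "u \<in> U"
  shows "x + s * u \<in> mod_prod S U"
proof -
  obtain n :: nat and f g where fg: "\<forall>i<n. f i \<in> S \<and> g i \<in> U" "x = (\<Sum>i<n. f i * g i)"
    using assms(1)[unfolded mod_prod_def mem_Collect_eq] by blast
  have "x + s * u = (\<Sum>i<Suc n. (f(n := s)) i * (g(n := u)) i)"
    using fg(2) by simp
  moreover have "\<forall>i<Suc n. (f(n := s)) i \<in> S \<and> (g(n := u)) i \<in> U" using fg assms by auto
  ultimately show ?thesis unfolding mod_prod_def by blast
qed

lemma mod_prod_add:
  assumes "x \<in> mod_prod S U" "y \<in> mod_prod S U"
  shows "x + y \<in> mod_prod S U"
proof -
  obtain n :: nat and f g where fg: "\<forall>i<n. f i \<in> S \<and> g i \<in> U" "y = (\<Sum>i<n. f i * g i)"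
    using assms(2)[unfolded mod_prod_def mem_Collect_eq] by blast
  have "x + (\<Sum>i<k. f i * g i) \<in> mod_prod S U" if "k \<le> n" for k
    using that
  proof (induction k)
    case 0 then show ?case using assms(1) by simp
  next
    case (Suc k)
    then have "x + (\<Sum>i<k. f i * g i) + f k * g k \<in> mod_prod S U"
      using fg(1) by (intro mod_prod_add_one) auto
    then show ?case by (simp add: add.assoc)
  qed
  then show ?thesis using fg(2) by simp
qed

theorem corollary3p5:
  fixes A I :: "'b::comm_ring_1 set"
  assumes "is_subring A"
    and "finite_character A"
    and "ideal_of A I"
    and "B_regular I"
    and "locally_principal A I"
  shows "B_invertible A I"
proof -
  have sub: "is_subring A" and Iid: "ideal_of A I" using assms by auto
  have IA: "I \<subseteq> A" using Iid by (simp add: ideal_of_def)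
  have "1 \<in> mod_prod I UNIV" using assms(4) by (simp add: B_regular_def)
  then obtain n :: nat and x b where xb: "\<forall>i<n. x i \<in> I" "1 = (\<Sum>i<n. x i * b i)"
    unfolding mod_prod_def mem_Collect_eq by blast
  define X0 where "X0 = x ` {..<n}"
  define J where "J = spn A X0"
  have X0I: "X0 \<subseteq> I" using xb(1) by (auto simp: X0_def)
  have finX0: "finite X0" by (simp add: X0_def)
  have Jid: "ideal_of A J" unfolding J_def using spn_ideal[OF sub] X0I IA by blast
  have xJ: "x i \<in> J" if "i < n" for i
    unfolding J_def using spn_mem[OF sub finX0] that by (auto simp: X0_def)
  have JB: "B_regular J"
    unfolding B_regular_def
  proof (rule set_eqI, rule iffI)
    fix z :: 'b
    have "(\<Sum>i<n. x i * (b i * z)) = (\<Sum>i<n. x i * b i) * z"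
      by (simp add: sum_distrib_right mult.assoc)
    also have "\<dots> = z" using xb(2)[symmetric] by simp
    finally have "z = (\<Sum>i<n. x i * (b i * z))" by simp
    moreover have "\<forall>i<n. x i \<in> J \<and> b i * z \<in> (UNIV::'b set)" using xJ by simp
    ultimately show "z \<in> mod_prod J UNIV" unfolding mod_prod_def mem_Collect_eq
      by (intro exI[of _ n] exI[of _ x] exI[of _ "\<lambda>i. b i * z"]) simp
  qed simp
  define MJ where "MJ = {m. maximal_ideal_of A m \<and> J \<subseteq> m}"
  have finMJ: "finite MJ" using assms(2) Jid JB by (simp add: finite_character_def MJ_def)
  define g where "g m = (SOME a. a \<in> I \<and> (\<forall>b\<in>I. \<exists>t\<in>A - m. \<exists>c\<in>A. t * b = c * a))" for m
  have g: "g m \<in> I \<and> (\<forall>b\<in>I. \<exists>t\<in>A - m. \<exists>c\<in>A. t * b = c * g m)" if "maximal_ideal_of A m" for m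
  proof -
    have "\<exists>a. a \<in> I \<and> (\<forall>b\<in>I. \<exists>t\<in>A - m. \<exists>c\<in>A. t * b = c * a)"
      using assms(5) that unfolding locally_principal_def by blast
    then show ?thesis unfolding g_def by (rule someI_ex)
  qed
  define F where "F = X0 \<union> g ` MJ"
  have finF: "finite F" using finX0 finMJ by (simp add: F_def)
  have FI: "F \<subseteq> I" using X0I g by (auto simp: F_def MJ_def)
  have FA: "F \<subseteq> A" using FI IA by blast
  have spF: "ideal_of A (spn A F)" using spn_ideal[OF sub FA] .
  have Fsp: "y \<in> spn A F" if "y \<in> F" for y using spn_mem[OF sub finF that] .
  have IF: "I \<subseteq> spn A F"
  proof
    fix c assume c: "c \<in> I"
    then have cA: "c \<in> A" using IA by blast
    define K where "K = {s \<in> A. s * c \<in> spn A F}"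
    have Kid: "ideal_of A K"
      unfolding ideal_of_def A_submodule_def
    proof (intro conjI ballI)
      show "0 \<in> K" using spF sr[OF sub] by (auto simp: K_def ideal_of_def A_submodule_def)
      show "K \<subseteq> A" by (auto simp: K_def)
    next
      fix s s' assume "s \<in> K" "s' \<in> K"
      then show "s + s' \<in> K" using spF sr[OF sub]
        by (auto simp: K_def ideal_of_def A_submodule_def distrib_right)
    next
      fix a s assume "a \<in> A" "s \<in> K"
      then show "a * s \<in> K" using spF sr[OF sub]
        by (auto simp: K_def ideal_of_def A_submodule_def mult.assoc)
    qed
    show "c \<in> spn A F"
    proof (rule ccontr)
      assume nc: "c \<notin> spn A F"
      then have "1 \<notin> K" by (simp add: K_def)
      then obtain m where m: "maximal_ideal_of A m" "K \<subseteq> m" using krull[OF sub Kid] by blast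
      have mi: "ideal_of A m" using m by (simp add: maximal_ideal_of_def)
      show False
      proof (cases "\<exists>i<n. x i \<notin> m")
        case True
        then obtain i where i: "i < n" "x i \<notin> m" by blast
        have "x i \<in> F" using i by (auto simp: F_def X0_def)
        then have "c * x i \<in> spn A F" using Fsp spF cA by (auto simp: ideal_of_def A_submodule_def)
        then have "x i \<in> K" using i xb(1) IA by (auto simp: K_def mult.commute)
        then show False using i m by blast
      next
        case False
        then have "X0 \<subseteq> m" by (auto simp: X0_def)
        then have "J \<subseteq> m" unfolding J_def using spn_sub[OF mi] by blast
        then have "m \<in> MJ" using m by (simp add: MJ_def)
        then have gF: "g m \<in> F" by (simp add: F_def)
        obtain t d where td: "t \<in> A - m" "d \<in> A" "t * c = d * g m" using g[OF m(1)] c by blast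
        have "d * g m \<in> spn A F" using Fsp[OF gF] spF td(2) by (auto simp: ideal_of_def A_submodule_def)
        then have "t \<in> K" using td by (simp add: K_def)
        then show False using td m by blast
      qed
    qed
  qed
  define U where "U = {u. \<forall>y\<in>I. u * y \<in> A}"
  have Umod: "A_submodule A U"
    unfolding A_submodule_def U_def using sr[OF sub]
    by (auto simp: distrib_right mult.assoc)
  have oneU: "1 \<in> U" using IA by (auto simp: U_def)
  have PA: "mod_prod I U \<subseteq> A"
  proof
    fix z assume "z \<in> mod_prod I U"
    then obtain k :: nat and s u where su: "\<forall>i<k. s i \<in> I \<and> u i \<in> U" "z = (\<Sum>i<k. s i * u i)"
      unfolding mod_prod_def mem_Collect_eq by blast
    have "(\<Sum>i<k. s i * u i) \<in> A"
      using su(1) by (intro sum_in_submod[OF sr_submod[OF sub]]) (auto simp: U_def mult.commute)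
    then show "z \<in> A" using su by simp
  qed
  have Pid: "ideal_of A (mod_prod I U)"
    unfolding ideal_of_def A_submodule_def
  proof (intro conjI ballI)
    show "0 \<in> mod_prod I U" unfolding mod_prod_def mem_Collect_eq
      by (intro exI[of _ "0::nat"] exI[of _ "\<lambda>_. 0"]) simp
    show "mod_prod I U \<subseteq> A" by (rule PA)
  next
    fix y z assume "y \<in> mod_prod I U" "z \<in> mod_prod I U"
    then show "y + z \<in> mod_prod I U" by (rule mod_prod_add)
  next
    fix a z assume az: "a \<in> A" "z \<in> mod_prod I U"
    then obtain k :: nat and s u where su: "\<forall>i<k. s i \<in> I \<and> u i \<in> U" "z = (\<Sum>i<k. s i * u i)"
      unfolding mod_prod_def mem_Collect_eq by blast
    have "a * z = (\<Sum>i<k. s i * (a * u i))" using su(2) by (simp add: sum_distrib_left mult.left_commute)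
    moreover have "\<forall>i<k. s i \<in> I \<and> a * u i \<in> U" using su(1) Umod az(1) by (auto simp: A_submodule_def)
    ultimately show "a * z \<in> mod_prod I U" unfolding mod_prod_def mem_Collect_eq
      by (intro exI[of _ k] exI[of _ s] exI[of _ "\<lambda>i. a * u i"]) simp
  qed
  have one: "1 \<in> mod_prod I U"
  proof (rule ccontr)
    assume "1 \<notin> mod_prod I U"
    then obtain m where m: "maximal_ideal_of A m" "mod_prod I U \<subseteq> m" using krull[OF sub Pid] by blast
    obtain a where a: "a \<in> I" "\<forall>b\<in>I. \<exists>t\<in>A - m. \<exists>c\<in>A. t * b = c * a"
      using assms(5) m(1) unfolding locally_principal_def by blast
    define tt where "tt y = (SOME t. t \<in> A - m \<and> (\<exists>c\<in>A. t * y = c * a))" for y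
    define cc where "cc y = (SOME c. c \<in> A \<and> tt y * y = c * a)" for y
    have ttc: "tt y \<in> A - m" "cc y \<in> A" "tt y * y = cc y * a" if "y \<in> F" for y
    proof -
      have "\<exists>t. t \<in> A - m \<and> (\<exists>c\<in>A. t * y = c * a)" using a(2) FI that by blast
      then have 1: "tt y \<in> A - m \<and> (\<exists>c\<in>A. tt y * y = c * a)" unfolding tt_def by (rule someI_ex)
      then have "\<exists>c. c \<in> A \<and> tt y * y = c * a" by blast
      then have "cc y \<in> A \<and> tt y * y = cc y * a" unfolding cc_def by (rule someI_ex)
      then show "tt y \<in> A - m" "cc y \<in> A" "tt y * y = cc y * a" using 1 by auto
    qed
    define t where "t = prod tt F"
    have tAm: "t \<in> A - m" unfolding t_def by (rule prod_notin[OF sub m(1) finF ttc(1)])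
    have tsplit: "t = tt y * prod tt (F - {y})" if "y \<in> F" for y
      unfolding t_def using prod.remove[OF finF that] .
    have prA: "prod tt (F - {y}) \<in> A" for y
    proof (rule prod_in[OF sub])
      fix i assume "i \<in> F - {y}"
      then have "tt i \<in> A - m" using ttc(1) by simp
      then show "tt i \<in> A" by simp
    qed
    define v where "v = (\<Sum>i<n. prod tt (F - {x i}) * cc (x i) * b i)"
    have xF: "x i \<in> F" if "i < n" for i using that by (auto simp: F_def X0_def)
    have av: "a * v = t"
    proof -
      have "t = t * (\<Sum>i<n. x i * b i)" using xb(2)[symmetric] by simp
      also have "\<dots> = (\<Sum>i<n. t * x i * b i)" by (simp add: sum_distrib_left mult.assoc)
      finally have "t = (\<Sum>i<n. t * x i * b i)" .
      also have "\<dots> = (\<Sum>i<n. a * (prod tt (F - {x i}) * cc (x i) * b i))"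
      proof (rule sum.cong)
        fix i assume "i \<in> {..<n}"
        then have i: "i < n" by simp
        have "t * x i * b i = prod tt (F - {x i}) * (tt (x i) * x i) * b i"
          using tsplit[OF xF[OF i]] by (simp add: ac_simps)
        also have "\<dots> = a * (prod tt (F - {x i}) * cc (x i) * b i)"
          using ttc(3)[OF xF[OF i]] by (simp add: ac_simps)
        finally show "t * x i * b i = a * (prod tt (F - {x i}) * cc (x i) * b i)" .
      qed simp
      also have "\<dots> = a * v" by (simp add: v_def sum_distrib_left)
      finally show ?thesis by simp
    qed
    define u where "u = t * v"
    have uy: "u * y \<in> A" if "y \<in> F" for y
    proof -
      have "u * y = prod tt (F - {y}) * (tt y * y) * v"
        using tsplit[OF that] by (simp add: u_def ac_simps)
      also have "\<dots> = prod tt (F - {y}) * cc y * (a * v)"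
        using ttc(3)[OF that] by (simp add: ac_simps)
      also have "\<dots> = prod tt (F - {y}) * cc y * t" using av by simp
      finally show ?thesis using prA ttc(2)[OF that] tAm sr[OF sub] by simp
    qed
    have uU: "u \<in> U" unfolding U_def
    proof (intro CollectI ballI)
      fix y assume "y \<in> I"
      then have "y \<in> spn A F" using IF by blast
      then obtain r where r: "\<forall>z\<in>F. r z \<in> A" "y = (\<Sum>z\<in>F. r z * z)" unfolding spn_def by blast
      have "u * y = (\<Sum>z\<in>F. r z * (u * z))" using r(2) by (simp add: sum_distrib_left ac_simps)
      also have "\<dots> \<in> A" using r(1) uy sr[OF sub] by (intro sum_in_submod[OF sr_submod[OF sub]]) auto
      finally show "u * y \<in> A" .
    qed
    have "a * u \<in> mod_prod I U"
    proof -
      have "a * u = (\<Sum>i<(1::nat). (\<lambda>_. a) i * (\<lambda>_. u) i)" by simp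
      moreover have "\<forall>i<(1::nat). (\<lambda>_. a) i \<in> I \<and> (\<lambda>_. u) i \<in> U" using a(1) uU by simp
      ultimately show ?thesis unfolding mod_prod_def mem_Collect_eq
        by (intro exI[of _ "1::nat"] exI[of _ "\<lambda>_. a"] exI[of _ "\<lambda>_. u"]) simp
    qed
    moreover have "a * u = t * t" using av by (metis u_def mult.left_commute)
    moreover have "t * t \<notin> m" using max_prime[OF sub m(1)] tAm by blast
    ultimately show False using m(2) by auto
  qed
  have "mod_prod I U = A" using ideal_one[OF sub Pid one] .
  then show ?thesis unfolding B_invertible_def using Umod by blast
qed

end
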